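(* Let $\Sigma$ be a $p\times p$ positive definite correlation matrix ($\Sigma_{jj}=1$), let $\beta\in\mathbb{R}^p$, $\sigma>0$, $\nu\ge0$, $n\ge1$, $\mu_n=\sqrt{2\log p/n}$, and let $S=\{j:|\beta_j|>\sigma\nu\mu_n\}$, $k=|S|$, $S^c=\{1,\dots,p\}\setminus S$. Let $\bar k\ge1$ be an integer with $k\le\bar k$. Suppose $\gamma(\Sigma):=\max_{j\neq j'}|\Sigma_{jj'}|\le\omega_0/(2\bar k)$ for some $0\le\omega_0<1$, and $\|\beta_{S^c}\|_1\le\sigma\eta\mu_n$ for some $\eta\ge0$; put $\bar\eta=\eta/\bar k$. Then, if $1\le k\le\bar k$: (a) for every $T\subseteq\{1,\dots,p\}$ with $|T|=k$, $\lambda_{min}(\Sigma_{TT})\ge1-\omega_0/2$ and $\lambda_{max}(\Sigma_{TT})\le1+\omega_0/2$; (b) for every $T$ with $|T|=k$, $\max_{j\notin T}\|\Sigma_{TT}^{-1}\Sigma_{Tj}\|_1\le\omega_0$; (c) $\|\Sigma_{SS}^{-1}\Sigma_{SS^c}\beta_{S^c}\|_\infty\le\sigma\,\omega_0\bar\eta\,\mu_n$ and $\|\Sigma_{S^c|S}\beta_{S^c}\|_\infty\le\sigma(\nu+\omega_0\bar\eta)\mu_n$, where $\Sigma_{S^c|S}=\Sigma_{S^cS^c}-\Sigma_{S^cS}\Sigma_{SS}^{-1}\Sigma_{SS^c}$. If $k=0$, then $\|\Sigma\beta\|_\infty\le\sigma(\nu+\omega_0\bar\eta)\mu_n$.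
   Context: For index sets $A,A'$, $\Sigma_{AA'}$ is the submatrix with rows in $A$ and columns in $A'$, $\beta_A$ is the subvector indexed by $A$; $\lambda_{min}(\cdot),\lambda_{max}(\cdot)$ denote the smallest and largest eigenvalues of a symmetric matrix. *)

theory Defs
  imports "Jordan_Normal_Form.Matrix" "Jordan_Normal_Form.Char_Poly" "Jordan_Normal_Form.DL_Submatrix"
begin

(* Indices are 0..p-1 (the paper's 1..p shifted by one). *)

definition pos_def_mat :: "real mat \<Rightarrow> nat \<Rightarrow> bool" where
  "pos_def_mat A p \<longleftrightarrow> A \<in> carrier_mat p p \<and> A\<^sup>T = A \<and>
     (\<forall>v \<in> carrier_vec p. v \<noteq> 0\<^sub>v p \<longrightarrow> v \<bullet> (A *\<^sub>v v) > 0)"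

(* subvector beta_A, indices of A taken in increasing order (same convention as submatrix) *)
definition subvec :: "'a vec \<Rightarrow> nat set \<Rightarrow> 'a vec" where
  "subvec v A = vec (card {i. i < dim_vec v \<and> i \<in> A}) (\<lambda>i. v $ pick A i)"

definition mat_inv :: "real mat \<Rightarrow> real mat" where
  "mat_inv A = (THE B. B \<in> carrier_mat (dim_row A) (dim_row A) \<and>
                       A * B = 1\<^sub>m (dim_row A) \<and> B * A = 1\<^sub>m (dim_row A))"

definition lambda_min :: "real mat \<Rightarrow> real" where
  "lambda_min A = Min {x. eigenvalue A x}"

definition lambda_max :: "real mat \<Rightarrow> real" where
  "lambda_max A = Max {x. eigenvalue A x}"

definition norm1_vec :: "real vec \<Rightarrow> real" where
  "norm1_vec v = (\<Sum>i<dim_vec v. \<bar>v $ i\<bar>)"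

(* sup norm; the empty vector has norm 0 *)
definition norminf_vec :: "real vec \<Rightarrow> real" where
  "norminf_vec v = Max (insert 0 ((\<lambda>i. \<bar>v $ i\<bar>) ` {..<dim_vec v}))"

end

theory Submission
  imports Defs
begin


lemma norminf_ge0: "norminf_vec v \<ge> 0"
  unfolding norminf_vec_def by (simp add: Max_ge_iff)

lemma norminf_ge: "i < dim_vec v \<Longrightarrow> \<bar>v $ i\<bar> \<le> norminf_vec v"
  unfolding norminf_vec_def by (simp add: Max_ge_iff)

lemma norminf_le: "c \<ge> 0 \<Longrightarrow> (\<And>i. i < dim_vec v \<Longrightarrow> \<bar>v $ i\<bar> \<le> c) \<Longrightarrow> norminf_vec v \<le> c"
  unfolding norminf_vec_def by (auto simp add: Max_le_iff)

lemma norminf_attained: assumes "dim_vec v > 0" shows "\<exists>i<dim_vec v. norminf_vec v = \<bar>v $ i\<bar>"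
proof -
  have "norminf_vec v \<in> insert 0 ((\<lambda>i. \<bar>v $ i\<bar>) ` {..<dim_vec v})"
    unfolding norminf_vec_def by (rule Max_in) auto
  moreover have "\<bar>v $ 0\<bar> \<le> norminf_vec v" using norminf_ge assms by auto
  ultimately show ?thesis using assms by auto
qed

lemma sum_le_norminf: "(\<Sum>j<dim_vec v. \<bar>v $ j\<bar>) \<le> real (dim_vec v) * norminf_vec v"
proof -
  have "(\<Sum>j<dim_vec v. \<bar>v $ j\<bar>) \<le> (\<Sum>j<dim_vec v. norminf_vec v)"
    by (rule sum_mono) (simp add: norminf_ge)
  thus ?thesis by simp
qed

lemma norm1_ge0: "norm1_vec v \<ge> 0"
  unfolding norm1_vec_def by (simp add: sum_nonneg)

lemma bnd_mat_vec:
  fixes B :: "real mat"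
  assumes B: "B \<in> carrier_mat r c" and bd: "\<And>i j. i < r \<Longrightarrow> j < c \<Longrightarrow> \<bar>B $$ (i,j)\<bar> \<le> g"
    and w: "w \<in> carrier_vec c" and i: "i < r"
  shows "\<bar>(B *\<^sub>v w) $ i\<bar> \<le> g * (\<Sum>j<c. \<bar>w $ j\<bar>)"
proof -
  have "(B *\<^sub>v w) $ i = (\<Sum>j<c. B $$ (i,j) * w $ j)"
    using B w i by (auto simp: scalar_prod_def lessThan_atLeast0 intro!: sum.cong)
  also have "\<bar>\<dots>\<bar> \<le> (\<Sum>j<c. \<bar>B $$ (i,j) * w $ j\<bar>)" by (rule sum_abs)
  also have "\<dots> \<le> (\<Sum>j<c. g * \<bar>w $ j\<bar>)"
    by (rule sum_mono) (auto simp: abs_mult intro!: mult_right_mono bd i)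
  finally show ?thesis by (simp add: sum_distrib_left)
qed

lemma defect:
  fixes M :: "real mat"
  assumes M: "M \<in> carrier_mat m m" and d: "\<And>i. i < m \<Longrightarrow> M $$ (i,i) = 1"
    and od: "\<And>i j. i < m \<Longrightarrow> j < m \<Longrightarrow> i \<noteq> j \<Longrightarrow> \<bar>M $$ (i,j)\<bar> \<le> g" and g: "g \<ge> 0"
    and x: "x \<in> carrier_vec m" and i: "i < m"
  shows "\<bar>(M *\<^sub>v x) $ i - x $ i\<bar> \<le> g * (\<Sum>j<m. \<bar>x $ j\<bar>)"
proof -
  have xi: "x $ i = (\<Sum>j<m. (if j = i then 1 else 0) * x $ j)"
  proof -
    have "(\<Sum>j<m. (if j = i then 1 else 0) * x $ j) = (\<Sum>j<m. (if j = i then x $ j else 0))"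
      by (rule sum.cong) auto
    also have "\<dots> = x $ i" using i by simp
    finally show ?thesis by simp
  qed
  have "(M *\<^sub>v x) $ i - x $ i = (\<Sum>j<m. M $$ (i,j) * x $ j) - (\<Sum>j<m. (if j = i then 1 else 0) * x $ j)"
    using M x i by (subst xi[symmetric]) (auto simp: scalar_prod_def lessThan_atLeast0 intro!: sum.cong)
  also have "\<dots> = (\<Sum>j<m. (M $$ (i,j) - (if j = i then 1 else 0)) * x $ j)"
    by (simp add: sum_subtractf left_diff_distrib)
  also have "\<bar>\<dots>\<bar> \<le> (\<Sum>j<m. \<bar>(M $$ (i,j) - (if j = i then 1 else 0)) * x $ j\<bar>)" by (rule sum_abs)
  also have "\<dots> \<le> (\<Sum>j<m. g * \<bar>x $ j\<bar>)"
    by (rule sum_mono) (auto simp: abs_mult d i g intro!: mult_right_mono od i)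
  finally show ?thesis by (simp add: sum_distrib_left)
qed

lemma dd_inf:
  fixes M :: "real mat"
  assumes M: "M \<in> carrier_mat m m" and d: "\<And>i. i < m \<Longrightarrow> M $$ (i,i) = 1"
    and od: "\<And>i j. i < m \<Longrightarrow> j < m \<Longrightarrow> i \<noteq> j \<Longrightarrow> \<bar>M $$ (i,j)\<bar> \<le> g" and g: "g \<ge> 0"
    and mg: "real m * g \<le> 1/2"
    and x: "x \<in> carrier_vec m"
  shows "norminf_vec x \<le> 2 * norminf_vec (M *\<^sub>v x)"
proof (cases "m = 0")
  case True thus ?thesis using x norminf_ge0[of "M *\<^sub>v x"] by (auto simp: norminf_vec_def)
next
  case False
  then obtain i where i: "i < m" and Ni: "norminf_vec x = \<bar>x $ i\<bar>" using norminf_attained[of x] x by auto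
  have "\<bar>(M *\<^sub>v x) $ i - x $ i\<bar> \<le> g * (\<Sum>j<m. \<bar>x $ j\<bar>)" by (rule defect[OF M d od g x i])
  also have "\<dots> \<le> g * (real m * norminf_vec x)"
    using sum_le_norminf[of x] x g by (auto intro: mult_left_mono)
  also have "\<dots> \<le> 1/2 * norminf_vec x" using mg norminf_ge0[of x]
    by (metis mult.assoc mult.commute mult_right_mono)
  finally have "\<bar>(M *\<^sub>v x) $ i - x $ i\<bar> \<le> 1/2 * norminf_vec x" .
  moreover have "\<bar>(M *\<^sub>v x) $ i\<bar> \<le> norminf_vec (M *\<^sub>v x)" using norminf_ge[of i "M *\<^sub>v x"] i M by auto
  ultimately show ?thesis using Ni by linarith
qed

lemma dd_one:
  fixes M :: "real mat"
  assumes M: "M \<in> carrier_mat m m" and d: "\<And>i. i < m \<Longrightarrow> M $$ (i,i) = 1"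
    and od: "\<And>i j. i < m \<Longrightarrow> j < m \<Longrightarrow> i \<noteq> j \<Longrightarrow> \<bar>M $$ (i,j)\<bar> \<le> g" and g: "g \<ge> 0"
    and mg: "real m * g \<le> 1/2"
    and x: "x \<in> carrier_vec m"
  shows "norm1_vec x \<le> 2 * norm1_vec (M *\<^sub>v x)"
proof -
  let ?s = "\<Sum>j<m. \<bar>x $ j\<bar>"
  have "(\<Sum>i<m. \<bar>x $ i\<bar>) \<le> (\<Sum>i<m. \<bar>(M *\<^sub>v x) $ i\<bar> + g * ?s)"
  proof (rule sum_mono)
    fix i assume "i \<in> {..<m}"
    hence "\<bar>(M *\<^sub>v x) $ i - x $ i\<bar> \<le> g * ?s" using defect[OF M d od g x] by auto
    thus "\<bar>x $ i\<bar> \<le> \<bar>(M *\<^sub>v x) $ i\<bar> + g * ?s" by linarith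
  qed
  also have "\<dots> = (\<Sum>i<m. \<bar>(M *\<^sub>v x) $ i\<bar>) + real m * g * ?s" by (simp add: sum.distrib)
  also have "real m * g * ?s \<le> 1/2 * ?s" using mg by (intro mult_right_mono) (auto simp: sum_nonneg)
  finally show ?thesis using M x unfolding norm1_vec_def by simp
qed



lemma dd_eig:
  fixes M :: "real mat"
  assumes M: "M \<in> carrier_mat m m" and d: "\<And>i. i < m \<Longrightarrow> M $$ (i,i) = 1"
    and od: "\<And>i j. i < m \<Longrightarrow> j < m \<Longrightarrow> i \<noteq> j \<Longrightarrow> \<bar>M $$ (i,j)\<bar> \<le> g" and g: "g \<ge> 0"
    and ev: "eigenvalue M c"
  shows "\<bar>c - 1\<bar> \<le> real m * g"
proof -
  obtain v where v: "v \<in> carrier_vec m" "v \<noteq> 0\<^sub>v m" "M *\<^sub>v v = c \<cdot>\<^sub>v v"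
    using ev M unfolding eigenvalue_def eigenvector_def by auto
  obtain j where j: "j < m" "v $ j \<noteq> 0" using v(1,2) by (metis eq_vecI carrier_vecD index_zero_vec)
  then obtain i where i: "i < m" and Ni: "norminf_vec v = \<bar>v $ i\<bar>" using norminf_attained[of v] v by auto
  have "0 < \<bar>v $ j\<bar>" using j by auto
  also have "\<dots> \<le> norminf_vec v" using norminf_ge[of j v] j v by auto
  finally have Np: "norminf_vec v > 0" .
  have "\<bar>(M *\<^sub>v v) $ i - v $ i\<bar> \<le> g * (\<Sum>j<m. \<bar>v $ j\<bar>)" by (rule defect[OF M d od g v(1) i])
  also have "\<dots> \<le> g * (real m * norminf_vec v)"
    using sum_le_norminf[of v] v g by (auto intro: mult_left_mono)
  finally have e1: "\<bar>(M *\<^sub>v v) $ i - v $ i\<bar> \<le> g * (real m * norminf_vec v)" .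
  have e2: "(M *\<^sub>v v) $ i - v $ i = (c - 1) * v $ i" using v i by (simp add: algebra_simps)
  have "\<bar>c - 1\<bar> * norminf_vec v \<le> (real m * g) * norminf_vec v"
    using e1[unfolded e2 abs_mult] Ni by (simp add: algebra_simps)
  thus ?thesis using Np by simp
qed

lemma dd_det:
  fixes M :: "real mat"
  assumes M: "M \<in> carrier_mat m m" and d: "\<And>i. i < m \<Longrightarrow> M $$ (i,i) = 1"
    and od: "\<And>i j. i < m \<Longrightarrow> j < m \<Longrightarrow> i \<noteq> j \<Longrightarrow> \<bar>M $$ (i,j)\<bar> \<le> g" and g: "g \<ge> 0"
    and mg: "real m * g \<le> 1/2"
  shows "det M \<noteq> 0"
proof
  assume "det M = 0"
  then obtain v where v: "v \<in> carrier_vec m" "v \<noteq> 0\<^sub>v m" "M *\<^sub>v v = 0\<^sub>v m"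
    using det_0_iff_vec_prod_zero[OF M] by auto
  have "norminf_vec v \<le> 2 * norminf_vec (M *\<^sub>v v)" by (rule dd_inf[OF M d od g mg v(1)])
  also have "norminf_vec (M *\<^sub>v v) = 0" unfolding v(3)
    by (rule antisym[OF norminf_le norminf_ge0]) auto
  finally have "norminf_vec v \<le> 0" by simp
  hence "\<And>j. j < m \<Longrightarrow> v $ j = 0" using norminf_ge[of _ v] v(1) by force
  hence "v = 0\<^sub>v m" using v(1) by (intro eq_vecI) auto
  thus False using v(2) by simp
qed

lemma mat_inv_props:
  fixes M :: "real mat"
  assumes M: "M \<in> carrier_mat m m" and d: "det M \<noteq> 0"
  shows "mat_inv M \<in> carrier_mat m m \<and> M * mat_inv M = 1\<^sub>m m"
proof -
  from det_non_zero_imp_unit[OF M d, of undefined]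
  obtain B where B: "B \<in> carrier_mat m m" "M * B = 1\<^sub>m m" "B * M = 1\<^sub>m m"
    unfolding Units_def ring_mat_def by auto
  have dr: "dim_row M = m" using M by auto
  have "mat_inv M = B" unfolding mat_inv_def dr
  proof (rule the_equality)
    show "B \<in> carrier_mat m m \<and> M * B = 1\<^sub>m m \<and> B * M = 1\<^sub>m m" using B by auto
    fix B' assume B': "B' \<in> carrier_mat m m \<and> M * B' = 1\<^sub>m m \<and> B' * M = 1\<^sub>m m"
    have B'c: "B' \<in> carrier_mat m m" using B' by blast
    have "B' = B' * (M * B)" using B(2) right_mult_one_mat[OF B'c] by simp
    also have "\<dots> = (B' * M) * B" using assoc_mult_mat[OF B'c M B(1)] by simp
    also have "\<dots> = B" using B' B(1) left_mult_one_mat by metis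
    finally show "B' = B" .
  qed
  thus ?thesis using B by simp
qed

lemma mat_inv_apply:
  fixes M :: "real mat"
  assumes M: "M \<in> carrier_mat m m" and d: "det M \<noteq> 0" and v: "v \<in> carrier_vec m"
  shows "mat_inv M *\<^sub>v v \<in> carrier_vec m" "M *\<^sub>v (mat_inv M *\<^sub>v v) = v"
proof -
  note I = mat_inv_props[OF M d]
  show "mat_inv M *\<^sub>v v \<in> carrier_vec m" using I v by auto
  have "(M * mat_inv M) *\<^sub>v v = M *\<^sub>v (mat_inv M *\<^sub>v v)" using I M v by (intro assoc_mult_mat_vec) auto
  thus "M *\<^sub>v (mat_inv M *\<^sub>v v) = v" using I v by (metis one_mult_mat_vec)
qed



lemma eig_from_fun:
  fixes M :: "real mat"
  assumes M: "M \<in> carrier_mat m m" and e: "\<And>i. i < m \<Longrightarrow> (\<Sum>j<m. M $$ (i,j) * f j) = r * f i"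
    and j: "j < m" "f j \<noteq> 0"
  shows "eigenvalue M r"
proof -
  let ?u = "vec m f"
  have "eigenvector M ?u r" unfolding eigenvector_def
  proof (intro conjI)
    show "?u \<in> carrier_vec (dim_row M)" using M by auto
    show "?u \<noteq> 0\<^sub>v (dim_row M)" using M j by (metis index_vec index_zero_vec(1) carrier_matD(1))
    show "M *\<^sub>v ?u = r \<cdot>\<^sub>v ?u"
      by (rule eq_vecI) (use M e in \<open>auto simp: scalar_prod_def lessThan_atLeast0\<close>)
  qed
  thus ?thesis unfolding eigenvalue_def by blast
qed

lemma sym_eig_exists:
  fixes M :: "real mat"
  assumes M: "M \<in> carrier_mat m m" and m: "m > 0"
    and sym: "\<And>i j. i < m \<Longrightarrow> j < m \<Longrightarrow> M $$ (i,j) = M $$ (j,i)"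
  shows "\<exists>r. eigenvalue M r"
proof -
  let ?C = "map_mat complex_of_real M"
  have C: "?C \<in> carrier_mat m m" using M by simp
  have "degree (char_poly ?C) = m" using degree_monic_char_poly[OF C] by simp
  hence "\<not> constant (poly (char_poly ?C))" using m by (subst constant_degree) simp
  then obtain a where "poly (char_poly ?C) a = 0" using fundamental_theorem_of_algebra by blast
  hence "eigenvalue ?C a" using eigenvalue_root_char_poly[OF C] by simp
  then obtain v where v: "v \<in> carrier_vec m" "v \<noteq> 0\<^sub>v m" "?C *\<^sub>v v = a \<cdot>\<^sub>v v"
    unfolding eigenvalue_def eigenvector_def using C by auto
  have ev: "(\<Sum>j<m. complex_of_real (M $$ (i,j)) * v $ j) = a * v $ i" if i: "i < m" for i
  proof -
    have "(?C *\<^sub>v v) $ i = a * v $ i" using v(3) i v(1) by simp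
    thus ?thesis using i M v(1) by (simp add: scalar_prod_def lessThan_atLeast0)
  qed
  define s where "s = (\<Sum>i<m. \<Sum>j<m. cnj (v $ i) * complex_of_real (M $$ (i,j)) * v $ j)"
  define Nr where "Nr = (\<Sum>i<m. (cmod (v $ i))\<^sup>2)"
  have "s = (\<Sum>i<m. cnj (v $ i) * (\<Sum>j<m. complex_of_real (M $$ (i,j)) * v $ j))"
    unfolding s_def by (simp add: sum_distrib_left mult.assoc)
  also have "\<dots> = (\<Sum>i<m. a * (v $ i * cnj (v $ i)))" by (rule sum.cong) (auto simp: ev)
  also have "\<dots> = a * complex_of_real Nr"
    unfolding Nr_def by (simp add: sum_distrib_left complex_norm_square[symmetric] del: of_real_power)
  finally have s1: "s = a * complex_of_real Nr" .
  have "cnj s = (\<Sum>i<m. \<Sum>j<m. v $ i * complex_of_real (M $$ (i,j)) * cnj (v $ j))"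
    unfolding s_def by simp
  also have "\<dots> = (\<Sum>j<m. \<Sum>i<m. v $ i * complex_of_real (M $$ (i,j)) * cnj (v $ j))"
    by (rule sum.swap)
  also have "\<dots> = s" unfolding s_def
    by (intro sum.cong refl) (auto simp: sym mult.commute mult.left_commute)
  finally have "cnj s = s" .
  hence "Im s = 0" by (metis complex_cnj_cancel_iff complex_cnj_zero_iff  Im_complex_of_real complex_cnj_complex_of_real Reals_cnj_iff Reals_def complex_is_Real_iff rangeE)
  obtain j where j: "j < m" "v $ j \<noteq> 0" using v(1,2) by (metis eq_vecI carrier_vecD index_zero_vec)
  have "Nr \<ge> (cmod (v $ j))\<^sup>2" unfolding Nr_def
    by (rule member_le_sum) (use j in auto)
  moreover have "(cmod (v $ j))\<^sup>2 > 0" using j by simp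
  ultimately have Np: "Nr > 0" by linarith
  have "Im a * Nr = 0" using \<open>Im s = 0\<close> s1 by simp
  hence "Im a = 0" using Np by simp
  hence a: "a = complex_of_real (Re a)" by (simp add: complex_eq_iff)
  have re: "(\<Sum>j<m. M $$ (i,j) * Re (v $ j)) = Re a * Re (v $ i)" if "i < m" for i
    using arg_cong[OF ev[OF that], of Re] by (subst (asm) a) simp
  have im: "(\<Sum>j<m. M $$ (i,j) * Im (v $ j)) = Re a * Im (v $ i)" if "i < m" for i
    using arg_cong[OF ev[OF that], of Im] by (subst (asm) a) simp
  show ?thesis
  proof (cases "Re (v $ j) = 0")
    case False
    thus ?thesis using eig_from_fun[OF M re j(1)] by blast
  next
    case True
    hence "Im (v $ j) \<noteq> 0" using j(2) complex_eq_iff by force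
    thus ?thesis using eig_from_fun[OF M im j(1)] by blast
  qed
qed



lemma sub_carrier:
  assumes "A \<in> carrier_mat p p" "I \<subseteq> {0..<p}" "J \<subseteq> {0..<p}"
  shows "submatrix A I J \<in> carrier_mat (card I) (card J)"
proof -
  have "{i. i < p \<and> i \<in> I} = I" "{i. i < p \<and> i \<in> J} = J" using assms by auto
  thus ?thesis using assms unfolding submatrix_def by auto
qed

lemma sub_index:
  assumes "A \<in> carrier_mat p p" "I \<subseteq> {0..<p}" "J \<subseteq> {0..<p}" "i < card I" "j < card J"
  shows "submatrix A I J $$ (i,j) = A $$ (pick I i, pick J j)"
proof -
  have "{i. i < p \<and> i \<in> I} = I" "{i. i < p \<and> i \<in> J} = J" using assms by auto
  thus ?thesis using assms by (intro submatrix_index) auto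
qed

lemma pick_in: "I \<subseteq> {0..<p} \<Longrightarrow> i < card I \<Longrightarrow> pick I i \<in> I"
  by (rule pick_in_set) (rule disjI1)

lemma pick_lt: "I \<subseteq> {0..<p} \<Longrightarrow> i < card I \<Longrightarrow> pick I i < p"
proof -
  assume a: "I \<subseteq> {0..<p}" "i < card I"
  have "pick I i \<in> I" using pick_in[OF a] .
  thus ?thesis using a(1) by auto
qed

lemma pick_inj: "I \<subseteq> {0..<p} \<Longrightarrow> i < card I \<Longrightarrow> j < card I \<Longrightarrow> i \<noteq> j \<Longrightarrow> pick I i \<noteq> pick I j"
proof -
  assume a: "I \<subseteq> {0..<p}" "i < card I" "j < card I" "i \<noteq> j"
  show ?thesis
  proof (cases "i < j")
    case True thus ?thesis using pick_mono[of j I i] a by auto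
  next
    case False hence "j < i" using a by auto
    thus ?thesis using pick_mono[of i I j] a by auto
  qed
qed

lemma subvec_carrier:
  assumes "v \<in> carrier_vec p" "I \<subseteq> {0..<p}"
  shows "subvec v I \<in> carrier_vec (card I)"
proof -
  have "{i. i < p \<and> i \<in> I} = I" using assms by auto
  thus ?thesis using assms unfolding subvec_def by auto
qed

lemma subvec_index:
  assumes "v \<in> carrier_vec p" "I \<subseteq> {0..<p}" "i < card I"
  shows "subvec v I $ i = v $ pick I i"
proof -
  have "{i. i < p \<and> i \<in> I} = I" using assms by auto
  thus ?thesis using assms unfolding subvec_def by auto
qed

lemma pick_atLeast: "i < p \<Longrightarrow> pick {0..<p} i = i"
proof -
  assume i: "i < p"
  have "{a \<in> {0..<p}. a < i} = {0..<i}" using i by auto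
  thus ?thesis using pick_card_in_set[of i "{0..<p}"] i by simp
qed

lemma subvec_all: "v \<in> carrier_vec p \<Longrightarrow> subvec v {0..<p} = v"
proof -
  assume v: "v \<in> carrier_vec p"
  have c: "subvec v {0..<p} \<in> carrier_vec p" using subvec_carrier[OF v, of "{0..<p}"] by simp
  show ?thesis
  proof (rule eq_vecI)
    fix i assume "i < dim_vec v"
    hence i: "i < p" using v by auto
    show "subvec v {0..<p} $ i = v $ i" using subvec_index[OF v, of "{0..<p}" i] i pick_atLeast[OF i] by simp
  qed (use c v in auto)
qed



theorem lemma1:
  fixes \<Sigma> :: "real mat" and \<beta> :: "real vec" and p n kbar :: nat
    and \<sigma> \<nu> \<omega>0 \<eta> :: real
  defines "\<mu> \<equiv> sqrt (2 * ln (real p) / real n)"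
  defines "S \<equiv> {j. j < p \<and> \<bar>\<beta> $ j\<bar> > \<sigma> * \<nu> * \<mu>}"
  defines "Sc \<equiv> {0..<p} - S"
  defines "k \<equiv> card S"
  defines "\<eta>bar \<equiv> \<eta> / real kbar"
  assumes pd: "pos_def_mat \<Sigma> p"
    and diag: "\<forall>j<p. \<Sigma> $$ (j, j) = 1"
    and beta: "\<beta> \<in> carrier_vec p"
    and sigma: "\<sigma> > 0" and nu: "\<nu> \<ge> 0" and n: "n \<ge> 1"
    and kbar: "kbar \<ge> 1" "k \<le> kbar"
    and omega: "0 \<le> \<omega>0" "\<omega>0 < 1"
    and gamma: "\<forall>j<p. \<forall>j'<p. j \<noteq> j' \<longrightarrow> \<bar>\<Sigma> $$ (j, j')\<bar> \<le> \<omega>0 / (2 * real kbar)"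
    and eta: "\<eta> \<ge> 0" "norm1_vec (subvec \<beta> Sc) \<le> \<sigma> * \<eta> * \<mu>"
  shows
    "(1 \<le> k \<longrightarrow>
       (\<forall>T. T \<subseteq> {0..<p} \<and> card T = k \<longrightarrow>
           lambda_min (submatrix \<Sigma> T T) \<ge> 1 - \<omega>0 / 2 \<and>
           lambda_max (submatrix \<Sigma> T T) \<le> 1 + \<omega>0 / 2) \<and>
       (\<forall>T. T \<subseteq> {0..<p} \<and> card T = k \<longrightarrow>
           (\<forall>j<p. j \<notin> T \<longrightarrow>
              norm1_vec (mat_inv (submatrix \<Sigma> T T) *\<^sub>v subvec (col \<Sigma> j) T) \<le> \<omega>0)) \<and>
       norminf_vec (mat_inv (submatrix \<Sigma> S S) *\<^sub>v (submatrix \<Sigma> S Sc *\<^sub>v subvec \<beta> Sc))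
          \<le> \<sigma> * \<omega>0 * \<eta>bar * \<mu> \<and>
       norminf_vec ((submatrix \<Sigma> Sc Sc - submatrix \<Sigma> Sc S * mat_inv (submatrix \<Sigma> S S) * submatrix \<Sigma> S Sc)
                      *\<^sub>v subvec \<beta> Sc)
          \<le> \<sigma> * (\<nu> + \<omega>0 * \<eta>bar) * \<mu>)
     \<and> (k = 0 \<longrightarrow> norminf_vec (\<Sigma> *\<^sub>v \<beta>) \<le> \<sigma> * (\<nu> + \<omega>0 * \<eta>bar) * \<mu>)"
proof -
  have Sig: "\<Sigma> \<in> carrier_mat p p" and symT: "\<Sigma>\<^sup>T = \<Sigma>" using pd unfolding pos_def_mat_def by auto
  have sym: "\<Sigma> $$ (a,b) = \<Sigma> $$ (b,a)" if "a < p" "b < p" for a b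
  proof -
    have "\<Sigma>\<^sup>T $$ (a,b) = \<Sigma> $$ (b,a)" using Sig that by simp
    thus ?thesis using symT by simp
  qed
  have diag': "\<Sigma> $$ (j,j) = 1" if "j < p" for j using diag that by simp
  define g where "g = \<omega>0 / (2 * real kbar)"
  have g0: "g \<ge> 0" using omega kbar unfolding g_def by simp
  have kg: "real (card T) * g \<le> \<omega>0 / 2" if "card T \<le> kbar" for T :: "nat set"
  proof -
    have "real (card T) * g \<le> real kbar * g" using that g0 by (intro mult_right_mono) auto
    also have "\<dots> = \<omega>0 / 2" using kbar unfolding g_def by (simp add: field_simps)
    finally show ?thesis .
  qed
  have kgh: "real (card T) * g \<le> 1 / 2" if "card T \<le> kbar" for T :: "nat set"
    using kg[OF that] omega by simp
  have gam: "\<bar>\<Sigma> $$ (a,b)\<bar> \<le> g" if "a < p" "b < p" "a \<noteq> b" for a b using gamma that g_def by auto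
  have mu0: "\<mu> \<ge> 0"
  proof -
    have "ln (real p) \<ge> 0" by (cases "p = 0") auto
    thus ?thesis unfolding \<mu>_def by simp
  qed
  have SS: "S \<subseteq> {0..<p}" unfolding S_def by auto
  have ScS: "Sc \<subseteq> {0..<p}" unfolding Sc_def by auto
  have disj: "S \<inter> Sc = {}" unfolding Sc_def by auto
  have cS: "card S = k" unfolding k_def ..
  have cardS: "card S \<le> kbar" using kbar k_def by simp
  define X where "X = \<sigma> * \<eta>bar * \<mu>"
  have X0: "X \<ge> 0" using sigma eta kbar mu0 unfolding X_def \<eta>bar_def by simp
  have gX: "g * (\<sigma> * \<eta> * \<mu>) = \<omega>0 / 2 * X" unfolding g_def X_def \<eta>bar_def using kbar by (simp add: field_simps)
  define b where "b = subvec \<beta> Sc"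
  have b: "b \<in> carrier_vec (card Sc)" unfolding b_def by (rule subvec_carrier[OF beta ScS])
  have nb: "(\<Sum>j<card Sc. \<bar>b $ j\<bar>) \<le> \<sigma> * \<eta> * \<mu>" using eta(2) b unfolding norm1_vec_def b_def by simp
  have gnb: "g * (\<Sum>j<card Sc. \<bar>b $ j\<bar>) \<le> \<omega>0 / 2 * X"
    using mult_left_mono[OF nb g0] gX by simp
  have MT: "submatrix \<Sigma> T T \<in> carrier_mat (card T) (card T)" if "T \<subseteq> {0..<p}" for T
    using sub_carrier[OF Sig that that] .
  have MTd: "submatrix \<Sigma> T T $$ (i,i) = 1" if "T \<subseteq> {0..<p}" "i < card T" for T i
    using sub_index[OF Sig that(1) that(1) that(2) that(2)] diag pick_lt[OF that] by simp
  have MTo: "\<bar>submatrix \<Sigma> T T $$ (i,j)\<bar> \<le> g" if "T \<subseteq> {0..<p}" "i < card T" "j < card T" "i \<noteq> j" for T i j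
    using sub_index[OF Sig that(1) that(1) that(2) that(3)]
      gam[OF pick_lt[OF that(1,2)] pick_lt[OF that(1,3)] pick_inj[OF that]] by simp
  have MIJ: "\<bar>submatrix \<Sigma> I J $$ (i,j)\<bar> \<le> g"
    if "I \<subseteq> {0..<p}" "J \<subseteq> {0..<p}" "I \<inter> J = {}" "i < card I" "j < card J" for I J i j
  proof -
    have "pick I i \<noteq> pick J j" using pick_in[OF that(1,4)] pick_in[OF that(2,5)] that(3) by auto
    thus ?thesis using sub_index[OF Sig that(1,2,4,5)] gam[OF pick_lt[OF that(1,4)] pick_lt[OF that(2,5)]] by simp
  qed
  have bound0: "0 \<le> \<sigma> * (\<nu> + \<omega>0 * \<eta>bar) * \<mu>" using sigma nu omega eta kbar mu0 unfolding \<eta>bar_def by simp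
  have r: "\<sigma> * (\<nu> + \<omega>0 * \<eta>bar) * \<mu> = \<sigma> * \<nu> * \<mu> + \<omega>0 * X" unfolding X_def by (simp add: algebra_simps)

  have partA: "lambda_min (submatrix \<Sigma> T T) \<ge> 1 - \<omega>0 / 2 \<and> lambda_max (submatrix \<Sigma> T T) \<le> 1 + \<omega>0 / 2"
    if T: "T \<subseteq> {0..<p}" "card T = k" "1 \<le> k" for T
  proof -
    let ?M = "submatrix \<Sigma> T T"
    let ?E = "{x. eigenvalue ?M x}"
    have M: "?M \<in> carrier_mat k k" using MT[OF T(1)] T(2) by simp
    have bnd: "\<bar>x - 1\<bar> \<le> \<omega>0 / 2" if xE: "x \<in> ?E" for x
    proof -
      have "\<bar>x - 1\<bar> \<le> real (card T) * g"
        by (rule dd_eig[OF MT[OF T(1)] MTd[OF T(1)] MTo[OF T(1)] g0]) (use xE in auto)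
      also have "\<dots> \<le> \<omega>0/2" using kg[of T] T cardS cS by simp
      finally show ?thesis .
    qed
    have "char_poly ?M \<noteq> 0" using degree_monic_char_poly[OF M] by auto
    hence fin: "finite ?E" using eigenvalue_root_char_poly[OF M] poly_roots_finite by simp
    have ne: "?E \<noteq> {}"
    proof -
      have "\<exists>r. eigenvalue ?M r"
      proof (rule sym_eig_exists[OF M])
        show "0 < k" using T by simp
        fix i j assume "i < k" "j < k"
        thus "?M $$ (i,j) = ?M $$ (j,i)" using sub_index[OF Sig T(1) T(1)] T(2) sym pick_lt[OF T(1)] by simp
      qed
      thus ?thesis by auto
    qed
    have "\<bar>Min ?E - 1\<bar> \<le> \<omega>0 / 2" "\<bar>Max ?E - 1\<bar> \<le> \<omega>0 / 2"
      using bnd[OF Min_in[OF fin ne]] bnd[OF Max_in[OF fin ne]] by auto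
    hence "1 - \<omega>0 / 2 \<le> Min ?E \<and> Max ?E \<le> 1 + \<omega>0 / 2" by linarith
    thus ?thesis unfolding lambda_min_def lambda_max_def .
  qed

  have partB: "norm1_vec (mat_inv (submatrix \<Sigma> T T) *\<^sub>v subvec (col \<Sigma> j) T) \<le> \<omega>0"
    if T: "T \<subseteq> {0..<p}" "card T = k" and j: "j < p" "j \<notin> T" for T j
  proof -
    let ?M = "submatrix \<Sigma> T T"
    let ?v = "subvec (col \<Sigma> j) T"
    have cT: "card T \<le> kbar" using T cardS cS by simp
    have cj: "col \<Sigma> j \<in> carrier_vec p" using col_dim[of \<Sigma> j] Sig by auto
    have v: "?v \<in> carrier_vec (card T)" by (rule subvec_carrier[OF cj T(1)])
    have dM: "det ?M \<noteq> 0" by (rule dd_det[OF MT[OF T(1)] MTd[OF T(1)] MTo[OF T(1)] g0 kgh[OF cT]])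
    have nv: "norm1_vec ?v \<le> \<omega>0 / 2"
    proof -
      have ei: "\<bar>?v $ i\<bar> = \<bar>\<Sigma> $$ (pick T i, j)\<bar>" if i: "i < card T" for i
      proof -
        have "?v $ i = col \<Sigma> j $ pick T i" by (rule subvec_index[OF cj T(1) i])
        also have "\<dots> = \<Sigma> $$ (pick T i, j)" using pick_lt[OF T(1) i] j Sig by (intro index_col) auto
        finally show ?thesis by simp
      qed
      have "norm1_vec ?v = (\<Sum>i<card T. \<bar>\<Sigma> $$ (pick T i, j)\<bar>)"
        unfolding norm1_vec_def
      proof (rule sum.cong)
        show "{..<dim_vec ?v} = {..<card T}" using v by simp
      qed (use ei in simp)
      also have "\<dots> \<le> (\<Sum>i<card T. g)"
      proof (rule sum_mono)
        fix i assume "i \<in> {..<card T}"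
        hence i: "i < card T" by simp
        have "pick T i \<noteq> j" using pick_in[OF T(1) i] j by auto
        thus "\<bar>\<Sigma> $$ (pick T i, j)\<bar> \<le> g" using gam[OF pick_lt[OF T(1) i] j(1)] by simp
      qed
      also have "\<dots> \<le> \<omega>0/2" using kg[OF cT] by simp
      finally show ?thesis .
    qed
    have "norm1_vec (mat_inv ?M *\<^sub>v ?v) \<le> 2 * norm1_vec (?M *\<^sub>v (mat_inv ?M *\<^sub>v ?v))"
      by (rule dd_one[OF MT[OF T(1)] MTd[OF T(1)] MTo[OF T(1)] g0 kgh[OF cT] mat_inv_apply(1)[OF MT[OF T(1)] dM v]])
    also have "\<dots> = 2 * norm1_vec ?v" using mat_inv_apply(2)[OF MT[OF T(1)] dM v] by simp
    finally show ?thesis using nv by simp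
  qed

  have partC: "norminf_vec (mat_inv (submatrix \<Sigma> S S) *\<^sub>v (submatrix \<Sigma> S Sc *\<^sub>v subvec \<beta> Sc))
          \<le> \<sigma> * \<omega>0 * \<eta>bar * \<mu> \<and>
       norminf_vec ((submatrix \<Sigma> Sc Sc - submatrix \<Sigma> Sc S * mat_inv (submatrix \<Sigma> S S) * submatrix \<Sigma> S Sc)
                      *\<^sub>v subvec \<beta> Sc)
          \<le> \<sigma> * (\<nu> + \<omega>0 * \<eta>bar) * \<mu>"
  proof -
    let ?M = "submatrix \<Sigma> S S"
    let ?D = "submatrix \<Sigma> S Sc"
    let ?A = "submatrix \<Sigma> Sc Sc"
    let ?B = "submatrix \<Sigma> Sc S"
    have M: "?M \<in> carrier_mat k k" using MT[OF SS] cS by simp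
    have D: "?D \<in> carrier_mat k (card Sc)" using sub_carrier[OF Sig SS ScS] cS by simp
    have A: "?A \<in> carrier_mat (card Sc) (card Sc)" using MT[OF ScS] .
    have Bm: "?B \<in> carrier_mat (card Sc) k" using sub_carrier[OF Sig ScS SS] cS by simp
    have dM: "det ?M \<noteq> 0" using dd_det[OF MT[OF SS] MTd[OF SS] MTo[OF SS] g0 kgh[OF cardS]] .
    define u where "u = ?D *\<^sub>v b"
    have u: "u \<in> carrier_vec k" using D b unfolding u_def by simp
    have ub: "\<bar>u $ i\<bar> \<le> \<omega>0 / 2 * X" if "i < k" for i
    proof -
      have "\<bar>u $ i\<bar> \<le> g * (\<Sum>j<card Sc. \<bar>b $ j\<bar>)" unfolding u_def
        by (rule bnd_mat_vec[OF D _ b that]) (use MIJ[OF SS ScS disj] cS in simp)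
      thus ?thesis using gnb by simp
    qed
    have nu_: "norminf_vec u \<le> \<omega>0 / 2 * X" by (rule norminf_le) (use ub u omega X0 in auto)
    define w where "w = mat_inv ?M *\<^sub>v u"
    have w: "w \<in> carrier_vec k" "?M *\<^sub>v w = u" unfolding w_def using mat_inv_apply[OF M dM u] by auto
    have nw: "norminf_vec w \<le> \<omega>0 * X"
    proof -
      have "norminf_vec w \<le> 2 * norminf_vec (?M *\<^sub>v w)"
        by (rule dd_inf[OF MT[OF SS, unfolded cS] MTd[OF SS, unfolded cS] MTo[OF SS, unfolded cS] g0
              kgh[OF cardS, unfolded cS] w(1)])
      also have "\<dots> = 2 * norminf_vec u" using w by simp
      finally show ?thesis using nu_ by simp
    qed
    have c1: "norminf_vec (mat_inv ?M *\<^sub>v (?D *\<^sub>v b)) \<le> \<sigma> * \<omega>0 * \<eta>bar * \<mu>"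
      using nw unfolding w_def u_def X_def by (simp add: mult_ac)
    have C: "mat_inv ?M \<in> carrier_mat k k" using mat_inv_props[OF M dM] by simp
    have eq: "(?A - ?B * mat_inv ?M * ?D) *\<^sub>v b = ?A *\<^sub>v b - ?B *\<^sub>v w"
    proof -
      have BCD: "?B * mat_inv ?M * ?D \<in> carrier_mat (card Sc) (card Sc)" using Bm C D by simp
      have "(?A - ?B * mat_inv ?M * ?D) *\<^sub>v b = ?A *\<^sub>v b - (?B * mat_inv ?M * ?D) *\<^sub>v b"
        by (rule minus_mult_distrib_mat_vec[OF A BCD b])
      also have "(?B * mat_inv ?M * ?D) *\<^sub>v b = ?B *\<^sub>v w"
      proof -
        have BC: "?B * mat_inv ?M \<in> carrier_mat (card Sc) k" using Bm C by simp
        have Db: "?D *\<^sub>v b \<in> carrier_vec k" using D b by simp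
        show ?thesis unfolding w_def u_def
          using assoc_mult_mat_vec[OF BC D b] assoc_mult_mat_vec[OF Bm C Db] by simp
      qed
      finally show ?thesis .
    qed
    have c2: "norminf_vec ((?A - ?B * mat_inv ?M * ?D) *\<^sub>v b) \<le> \<sigma> * (\<nu> + \<omega>0 * \<eta>bar) * \<mu>"
    proof (rule norminf_le[OF bound0])
      fix i assume "i < dim_vec ((?A - ?B * mat_inv ?M * ?D) *\<^sub>v b)"
      hence i: "i < card Sc" using A Bm by simp
      have t1: "\<bar>(?A *\<^sub>v b) $ i - b $ i\<bar> \<le> \<omega>0 / 2 * X"
        using defect[OF A MTd[OF ScS] MTo[OF ScS] g0 b i] gnb by simp
      have t2: "\<bar>b $ i\<bar> \<le> \<sigma> * \<nu> * \<mu>"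
      proof -
        have "pick Sc i \<in> Sc" by (rule pick_in[OF ScS i])
        hence "pick Sc i < p" "pick Sc i \<notin> S" unfolding Sc_def by auto
        thus ?thesis using subvec_index[OF beta ScS i] unfolding b_def S_def by auto
      qed
      have t3: "\<bar>(?B *\<^sub>v w) $ i\<bar> \<le> \<omega>0 / 2 * X"
      proof -
        have "\<bar>(?B *\<^sub>v w) $ i\<bar> \<le> g * (\<Sum>j<k. \<bar>w $ j\<bar>)"
          by (rule bnd_mat_vec[OF Bm _ w(1) i]) (use MIJ[OF ScS SS] disj cS in auto)
        also have "\<dots> \<le> g * (real k * norminf_vec w)"
          using sum_le_norminf[of w] w g0 by (auto intro: mult_left_mono)
        also have "\<dots> = (real k * g) * norminf_vec w" by simp
        also have "\<dots> \<le> (\<omega>0 / 2) * (\<omega>0 * X)"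
          using kg[OF cardS] cS nw norminf_ge0[of w] omega by (intro mult_mono) auto
        also have "\<dots> \<le> \<omega>0 / 2 * X" using omega X0 by (intro mult_left_mono) (auto intro: mult_left_le_one_le)
        finally show ?thesis .
      qed
      have e: "((?A - ?B * mat_inv ?M * ?D) *\<^sub>v b) $ i = (?A *\<^sub>v b) $ i - (?B *\<^sub>v w) $ i"
        unfolding eq using A Bm i by simp
      show "\<bar>((?A - ?B * mat_inv ?M * ?D) *\<^sub>v b) $ i\<bar> \<le> \<sigma> * (\<nu> + \<omega>0 * \<eta>bar) * \<mu>"
        unfolding e r using t1 t2 t3 by linarith
    qed
    show ?thesis using c1 c2 unfolding b_def by simp
  qed

  have partD: "norminf_vec (\<Sigma> *\<^sub>v \<beta>) \<le> \<sigma> * (\<nu> + \<omega>0 * \<eta>bar) * \<mu>" if k0: "k = 0"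
  proof -
    have "S = {}" using k0 k_def SS by (metis card_0_eq finite_atLeastLessThan finite_subset)
    hence Sc0: "Sc = {0..<p}" unfolding Sc_def by simp
    hence bb: "b = \<beta>" unfolding b_def using subvec_all[OF beta] by simp
    show ?thesis
    proof (rule norminf_le[OF bound0])
      fix i assume "i < dim_vec (\<Sigma> *\<^sub>v \<beta>)"
      hence i: "i < p" using Sig by simp
      have t1: "\<bar>(\<Sigma> *\<^sub>v \<beta>) $ i - \<beta> $ i\<bar> \<le> \<omega>0 / 2 * X"
        using defect[OF Sig diag' gam g0 beta i] gnb bb Sc0 by simp
      have t2: "\<bar>\<beta> $ i\<bar> \<le> \<sigma> * \<nu> * \<mu>" using i \<open>S = {}\<close> unfolding S_def by auto
      have "\<omega>0 / 2 * X \<le> \<omega>0 * X" using omega X0 by (simp add: mult_right_mono)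
      thus "\<bar>(\<Sigma> *\<^sub>v \<beta>) $ i\<bar> \<le> \<sigma> * (\<nu> + \<omega>0 * \<eta>bar) * \<mu>"
        unfolding r using t1 t2 by linarith
    qed
  qed
  show ?thesis using partA partB partC partD cS by auto
qed

end
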